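(* For $\alpha,\beta,\gamma>0$ and $n\ge2$, $$Z_n^{\mathcal{GS}}=\sum_{\theta\in\{0,1\}^2}C_\theta\det(K_\theta),\qquad C_\theta=\tfrac12(-1)^{(\theta_1+n+1)(\theta_2+n+1)}.$$
   Context: $\mathbb{T}_n=(\mathbb{Z}/n\mathbb{Z})^2$, $e^1=(1,0)$, $e^2=(0,1)$, $e^3=\frac12(e^1+e^2)$; mid-edges $\mathbb{M}_n$ = black $\{v+\frac12e^1:v\in\mathbb{T}_n\}$ ⊔ white $\{v+\frac12e^2:v\in\mathbb{T}_n\}$, coordinates mod $n$. A generalised snake configuration is a permutation $\bar\rho$ of $\mathbb{M}_n$ with $\bar\rho(x)\in\{x,x+e^3,x+e^1\}$ ($x$ black), $\bar\rho(x)\in\{x,x+e^3,x+e^2\}$ ($x$ white); $\mathcal{GS}_n$ their set. $S(\bar\rho)$ = number of vertices $v$ with $\bar\rho(v-\frac12e^1)=v+\frac12e^1$ and $\bar\rho(v-\frac12e^2)=v+\frac12e^2$ (crossings); $A,B,C$ = numbers of $x$ with $\bar\rho(x)=x+e^1$, $x+e^2$, $x+e^3$. $Z_n^{\mathcal{GS}}=\sum_{\bar\rho\in\mathcal{GS}_n}(-1)^{S(\bar\rho)}\alpha^{A(\bar\rho)}\beta^{B(\bar\rho)}\gamma^{C(\bar\rho)}$. For $\theta=(\theta_1,\theta_2)\in\{0,1\}^2$ the operator $K_\theta:\mathbb{M}_n\times\mathbb{M}_n\to\mathbb{C}$ is $K_\theta(x,x)=1$; $K_\theta(x,x+e^1)=\alpha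 e^{\pi i\theta_1/n}$ for $x$ black; $K_\theta(x,x+e^2)=\beta e^{\pi i\theta_2/n}$ for $x$ white; $K_\theta(x,x+e^3)=\gamma e^{\pi i(\theta_1+\theta_2)/(2n)}$; and $K_\theta(x,y)=0$ otherwise. *)

theory Defs
  imports Complex_Main "HOL-Combinatorics.Permutations"
begin

text \<open>Points of (1/2)Z^2 / nZ^2 are encoded in doubled coordinates, i.e. as integer pairs
  taken modulo 2n. A vertex v=(i,j) is (2i,2j); the black mid-edge v + e1/2 is (2i+1,2j);
  the white mid-edge v + e2/2 is (2i,2j+1).\<close>

type_synonym pt = "int \<times> int"

definition padd :: "nat \<Rightarrow> pt \<Rightarrow> pt \<Rightarrow> pt" where
  "padd n x y = ((fst x + fst y) mod (2 * int n), (snd x + snd y) mod (2 * int n))"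

definition e1 :: pt where "e1 = (2, 0)"
definition e2 :: pt where "e2 = (0, 2)"
definition e3 :: pt where "e3 = (1, 1)"

definition mids :: "nat \<Rightarrow> pt set" where
  "mids n = {(a, b). 0 \<le> a \<and> a < 2 * int n \<and> 0 \<le> b \<and> b < 2 * int n \<and> odd (a + b)}"

definition black :: "pt \<Rightarrow> bool" where
  "black x = odd (fst x)"

definition verts :: "nat \<Rightarrow> pt set" where
  "verts n = {(a, b). 0 \<le> a \<and> a < 2 * int n \<and> 0 \<le> b \<and> b < 2 * int n \<and> even a \<and> even b}"

definition GS :: "nat \<Rightarrow> (pt \<Rightarrow> pt) set" where
  "GS n = {\<rho>. \<rho> permutes mids n \<and>
     (\<forall>x \<in> mids n. (black x \<longrightarrow> \<rho> x \<in> {x, padd n x e3, padd n x e1}) \<and>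
                    (\<not> black x \<longrightarrow> \<rho> x \<in> {x, padd n x e3, padd n x e2}))}"

definition crossings :: "nat \<Rightarrow> (pt \<Rightarrow> pt) \<Rightarrow> nat" where
  "crossings n \<rho> = card {v \<in> verts n.
      \<rho> (padd n v (-1, 0)) = padd n v (1, 0) \<and> \<rho> (padd n v (0, -1)) = padd n v (0, 1)}"

definition cntA :: "nat \<Rightarrow> (pt \<Rightarrow> pt) \<Rightarrow> nat" where
  "cntA n \<rho> = card {x \<in> mids n. \<rho> x = padd n x e1}"
definition cntB :: "nat \<Rightarrow> (pt \<Rightarrow> pt) \<Rightarrow> nat" where
  "cntB n \<rho> = card {x \<in> mids n. \<rho> x = padd n x e2}"
definition cntC :: "nat \<Rightarrow> (pt \<Rightarrow> pt) \<Rightarrow> nat" where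
  "cntC n \<rho> = card {x \<in> mids n. \<rho> x = padd n x e3}"

definition Z_GS :: "nat \<Rightarrow> real \<Rightarrow> real \<Rightarrow> real \<Rightarrow> complex" where
  "Z_GS n \<alpha> \<beta> \<gamma> = (\<Sum>\<rho> \<in> GS n. (-1) ^ crossings n \<rho> *
      of_real (\<alpha> ^ cntA n \<rho> * \<beta> ^ cntB n \<rho> * \<gamma> ^ cntC n \<rho>))"

definition Kop :: "nat \<Rightarrow> real \<Rightarrow> real \<Rightarrow> real \<Rightarrow> nat \<Rightarrow> nat \<Rightarrow> pt \<Rightarrow> pt \<Rightarrow> complex" where
  "Kop n \<alpha> \<beta> \<gamma> t1 t2 x y =
     (if y = x then 1
      else if black x \<and> y = padd n x e1 then of_real \<alpha> * exp (pi * \<i> * of_nat t1 / of_nat n)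
      else if \<not> black x \<and> y = padd n x e2 then of_real \<beta> * exp (pi * \<i> * of_nat t2 / of_nat n)
      else if y = padd n x e3 then of_real \<gamma> * exp (pi * \<i> * of_nat (t1 + t2) / (2 * of_nat n))
      else 0)"

definition det_on :: "'a set \<Rightarrow> ('a \<Rightarrow> 'a \<Rightarrow> complex) \<Rightarrow> complex" where
  "det_on S M = (\<Sum>p \<in> {p. p permutes S}. of_int (sign p) * (\<Prod>x \<in> S. M x (p x)))"

end

theory Submission
  imports Defs
begin


definition pairs_k :: "('a \<Rightarrow> int) \<Rightarrow> 'a set \<Rightarrow> ('a \<times> 'a) set" where
  "pairs_k k X = {(x,y) \<in> X \<times> X. k x < k y}"

definition eps_k :: "('a \<Rightarrow> int) \<Rightarrow> 'a set \<Rightarrow> ('a \<Rightarrow> 'a) \<Rightarrow> int" where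
  "eps_k k X p = (\<Prod>q \<in> pairs_k k X. if k (p (fst q)) < k (p (snd q)) then 1 else -1)"

lemma prod_pm1:
  assumes "finite A"
  shows "(\<Prod>z\<in>A. if P z then 1 else -1 :: int) = (-1) ^ card {z\<in>A. \<not> P z}"
proof -
  have "(\<Prod>z\<in>A. if P z then 1 else -1 :: int) = prod (\<lambda>_. 1) (A \<inter> {z. P z}) * prod (\<lambda>_. -1) (A \<inter> - {z. P z})"
    by (rule prod.If_cases) (rule assms)
  also have "\<dots> = (-1) ^ card (A \<inter> - {z. P z})" by simp
  also have "A \<inter> - {z. P z} = {z\<in>A. \<not> P z}" by auto
  finally show ?thesis .
qed

lemma eps_card:
  assumes fin: "finite X" and inj: "inj_on k X" and p: "p permutes X"
  shows "eps_k k X p = (-1) ^ card {(x,y) \<in> X \<times> X. k x < k y \<and> k (p y) < k (p x)}"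
proof -
  have fp: "finite (pairs_k k X)" unfolding pairs_k_def
    by (rule finite_subset[of _ "X \<times> X"]) (use fin in auto)
  have "eps_k k X p = (-1) ^ card {q \<in> pairs_k k X. \<not> k (p (fst q)) < k (p (snd q))}"
    unfolding eps_k_def by (rule prod_pm1[OF fp])
  also have "{q \<in> pairs_k k X. \<not> k (p (fst q)) < k (p (snd q))} =
      {(x,y) \<in> X \<times> X. k x < k y \<and> k (p y) < k (p x)}"
  proof -
    have "k (p x) \<noteq> k (p y)" if "x \<in> X" "y \<in> X" "k x < k y" for x y
    proof
      assume "k (p x) = k (p y)"
      moreover have "p x \<in> X" "p y \<in> X" using that by (simp_all add: permutes_in_image[OF p])
      ultimately have "p x = p y" using inj by (auto dest: inj_onD)
      hence "x = y" using p by (metis permutes_inj injD)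
      thus False using that by simp
    qed
    thus ?thesis unfolding pairs_k_def by fastforce
  qed
  finally show ?thesis .
qed

lemma eps_comp:
  assumes fin: "finite X" and inj: "inj_on k X" and p: "p permutes X" and q: "q permutes X"
  shows "eps_k k X (p \<circ> q) = eps_k k X p * eps_k k X q"
proof -
  define P where "P = pairs_k k X"
  define s where "s = (\<lambda>a b. if k a < k b then 1 else -1 :: int)"
  define t where "t = (\<lambda>(a,b). s (p a) (p b) * s a b)"
  have fp: "finite P" unfolding P_def pairs_k_def
    by (rule finite_subset[of _ "X \<times> X"]) (use fin in auto)
  have kinj: "k a \<noteq> k b" if "a \<in> X" "b \<in> X" "a \<noteq> b" for a b
    using inj that by (auto dest: inj_onD)
  have pinX: "p a \<in> X" if "a \<in> X" for a using that by (simp add: permutes_in_image[OF p])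
  have qinX: "q a \<in> X" if "a \<in> X" for a using that by (simp add: permutes_in_image[OF q])
  have pinj: "p a \<noteq> p b" if "a \<noteq> b" for a b using p that by (metis permutes_inj injD)
  have qinj: "q a \<noteq> q b" if "a \<noteq> b" for a b using q that by (metis permutes_inj injD)
  have s_sym: "s b a = - s a b" if "a \<in> X" "b \<in> X" "a \<noteq> b" for a b
    using kinj[OF that] unfolding s_def by auto
  have t_sym: "t (b,a) = t (a,b)" if "a \<in> X" "b \<in> X" "a \<noteq> b" for a b
    using s_sym[OF that] s_sym[OF pinX[OF that(1)] pinX[OF that(2)] pinj[OF that(3)]]
    unfolding t_def by simp
  have ss: "s a b * s a b = 1" for a b unfolding s_def by auto
  define phi where "phi = (\<lambda>(x,y). if k (q x) < k (q y) then (q x, q y) else (q y, q x))"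
  have phiP: "phi z \<in> P" if "z \<in> P" for z
  proof -
    obtain x y where z: "z = (x,y)" by (cases z)
    have xy: "x \<in> X" "y \<in> X" "k x < k y" using that z unfolding P_def pairs_k_def by auto
    hence "x \<noteq> y" by auto
    hence "k (q x) \<noteq> k (q y)" using kinj qinX xy qinj by blast
    thus ?thesis using xy qinX unfolding z phi_def P_def pairs_k_def by auto
  qed
  have phi_inj: "inj_on phi P"
  proof (rule inj_onI)
    fix z w assume zw: "z \<in> P" "w \<in> P" "phi z = phi w"
    obtain x y where z: "z = (x,y)" by (cases z)
    obtain x' y' where w: "w = (x',y')" by (cases w)
    have xy: "x \<in> X" "y \<in> X" "k x < k y" "x' \<in> X" "y' \<in> X" "k x' < k y'"
      using zw z w unfolding P_def pairs_k_def by auto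
    have "{q x, q y} = {q x', q y'}" using zw(3) unfolding z w phi_def
      by (auto split: if_splits)
    hence "{x, y} = {x', y'}" using qinj by (metis doubleton_eq_iff)
    thus "z = w" using xy unfolding z w by (metis doubleton_eq_iff less_asym)
  qed
  have phi_img: "phi ` P = P"
    by (rule card_subset_eq[OF fp]) (use phiP card_image[OF phi_inj] in auto)
  have "eps_k k X (p \<circ> q) = (\<Prod>z\<in>P. s (p (q (fst z))) (p (q (snd z))))"
    unfolding eps_k_def P_def s_def by simp
  also have "\<dots> = (\<Prod>z\<in>P. t (phi z) * s (q (fst z)) (q (snd z)))"
  proof (rule prod.cong[OF refl])
    fix z assume "z \<in> P"
    then obtain x y where z: "z = (x,y)" "x \<in> X" "y \<in> X" "k x < k y"
      unfolding P_def pairs_k_def by auto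
    have "t (phi z) = t (q x, q y)"
      using t_sym[OF qinX[OF z(2)] qinX[OF z(3)]] qinj[of x y] z unfolding phi_def by auto
    thus "s (p (q (fst z))) (p (q (snd z))) = t (phi z) * s (q (fst z)) (q (snd z))"
      using ss[of "q x" "q y"] unfolding z t_def by (simp add: algebra_simps)
  qed
  also have "\<dots> = (\<Prod>z\<in>P. t (phi z)) * eps_k k X q"
    unfolding prod.distrib eps_k_def P_def s_def by simp
  also have "(\<Prod>z\<in>P. t (phi z)) = (\<Prod>z\<in>P. t z)"
    using prod.reindex[OF phi_inj, of t] phi_img by (simp add: comp_def)
  also have "\<dots> = eps_k k X p"
  proof -
    have "(\<Prod>z\<in>P. t z) = (\<Prod>z\<in>P. s (p (fst z)) (p (snd z))) * (\<Prod>z\<in>P. s (fst z) (snd z))"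
      unfolding t_def prod.distrib[symmetric] by (intro prod.cong) auto
    also have "(\<Prod>z\<in>P. s (fst z) (snd z)) = 1"
      by (rule prod.neutral) (auto simp: P_def pairs_k_def s_def)
    finally show ?thesis unfolding eps_k_def P_def s_def by simp
  qed
  finally show ?thesis .
qed

lemma eps_transpose_lt:
  assumes fin: "finite X" and inj: "inj_on k X" and ab: "a \<in> X" "b \<in> X" "k a < k b"
  shows "eps_k k X (Transposition.transpose a b) = -1"
proof -
  have anb: "a \<noteq> b" using ab by auto
  have tp: "Transposition.transpose a b permutes X" using ab(1,2) by (simp add: permutes_swap_id)
  define M where "M = {z \<in> X. k a < k z \<and> k z < k b}"
  have kinj: "k x \<noteq> k y" if "x \<in> X" "y \<in> X" "x \<noteq> y" for x y
    using inj that by (auto dest: inj_onD)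
  have I: "{(x,y) \<in> X \<times> X. k x < k y \<and> k (Transposition.transpose a b y) < k (Transposition.transpose a b x)}
     = {(a,b)} \<union> ({a} \<times> M) \<union> (M \<times> {b})" (is "?L = ?R")
  proof (rule set_eqI)
    fix z :: "'a \<times> 'a"
    obtain x y where z: "z = (x,y)" by (cases z)
    show "z \<in> ?L \<longleftrightarrow> z \<in> ?R"
      unfolding z M_def using ab anb kinj[of a] kinj[of b] kinj[of x y]
      by (cases "x = a"; cases "x = b"; cases "y = a"; cases "y = b") auto
  qed
  have fM: "finite M" unfolding M_def using fin by auto
  have "card ?R = 1 + card M + card M"
  proof -
    have d1: "{(a,b)} \<inter> ({a} \<times> M) = {}" unfolding M_def by auto
    have d2: "({(a,b)} \<union> ({a} \<times> M)) \<inter> (M \<times> {b}) = {}" unfolding M_def by auto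
    have "card ?R = card ({(a,b)} \<union> ({a} \<times> M)) + card (M \<times> {b})"
      by (rule card_Un_disjoint) (use fM d2 in auto)
    also have "card ({(a,b)} \<union> ({a} \<times> M)) = 1 + card ({a} \<times> M)"
      using card_Un_disjoint[of "{(a,b)}" "{a} \<times> M"] fM d1 by auto
    finally show ?thesis by (simp add: card_cartesian_product)
  qed
  thus ?thesis using eps_card[OF fin inj tp] I by simp
qed

lemma eps_transpose:
  assumes fin: "finite X" and inj: "inj_on k X" and ab: "a \<in> X" "b \<in> X" "a \<noteq> b"
  shows "eps_k k X (Transposition.transpose a b) = -1"
proof -
  have "k a \<noteq> k b" using inj ab by (auto dest: inj_onD)
  then consider "k a < k b" | "k b < k a" by linarith
  thus ?thesis
  proof cases
    case 1 thus ?thesis using eps_transpose_lt[OF fin inj ab(1,2)] by simp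
  next
    case 2 thus ?thesis using eps_transpose_lt[OF fin inj ab(2,1)] by (simp add: transpose_commute)
  qed
qed

lemma sign_eq_eps:
  assumes p: "p permutes X" and fin: "finite X" and inj: "inj_on k X"
  shows "sign p = eps_k k X p"
  using p fin
proof (induction rule: permutes_induct)
  case id
  have E: "{(x,y) \<in> X \<times> X. k x < k y \<and> k (id y) < k (id x)} = {}" by auto
  show ?case using eps_card[OF fin inj permutes_id] unfolding E by (simp add: id_def)
next
  case (swap a b p)
  have tp: "Transposition.transpose a b permutes X" using swap by (simp add: permutes_swap_id)
  have "sign (Transposition.transpose a b \<circ> p) = sign (Transposition.transpose a b) * sign p"
    using swap fin by (metis sign_compose permutes_imp_permutation permutation_swap_id)
  also have "\<dots> = - sign p" using swap by (simp add: sign_swap_id)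
  also have "\<dots> = eps_k k X (Transposition.transpose a b) * eps_k k X p"
    using swap eps_transpose[OF fin inj swap(1,2,3)] by simp
  also have "\<dots> = eps_k k X (Transposition.transpose a b \<circ> p)"
    using eps_comp[OF fin inj tp] swap by metis
  finally show ?case .
qed

lemma sign_inversions:
  fixes k :: "'a \<Rightarrow> int"
  assumes p: "p permutes X" and fin: "finite X" and inj: "inj_on k X"
  shows "sign p = (-1) ^ card {(x,y) \<in> X \<times> X. k x < k y \<and> k (p y) < k (p x)}"
  using sign_eq_eps[OF assms] eps_card[OF fin inj p] by simp



lemma mids_iff: "x \<in> mids n \<longleftrightarrow> 0 \<le> fst x \<and> fst x < 2 * int n \<and> 0 \<le> snd x \<and> snd x < 2 * int n \<and> odd (fst x + snd x)"
  by (cases x) (simp add: mids_def)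

lemma verts_iff: "x \<in> verts n \<longleftrightarrow> 0 \<le> fst x \<and> fst x < 2 * int n \<and> 0 \<le> snd x \<and> snd x < 2 * int n \<and> even (fst x) \<and> even (snd x)"
  by (cases x) (simp add: verts_def)

lemma padd_fst [simp]: "fst (padd n x y) = (fst x + fst y) mod (2 * int n)"
  and padd_snd [simp]: "snd (padd n x y) = (snd x + snd y) mod (2 * int n)"
  by (simp_all add: padd_def)

lemma odd_mod_even: "even (N::int) \<Longrightarrow> odd (u mod N) \<longleftrightarrow> odd u"
  by (metis dvd_mod_iff)

lemma mod_step:
  fixes u k N :: int
  assumes "0 \<le> u" "u < N" "0 \<le> k" "k \<le> N"
  shows "(u + k) mod N = (if u + k < N then u + k else u + k - N)"
proof (cases "u + k < N")
  case True thus ?thesis using assms by simp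
next
  case False
  have "(u + k) mod N = ((u + k - N) + N) mod N" by simp
  also have "\<dots> = (u + k - N) mod N" by (rule mod_add_self2)
  also have "\<dots> = u + k - N" using assms False by (intro mod_pos_pos_trivial) auto
  finally show ?thesis using False by simp
qed

lemma mod_step_m:
  fixes u N :: int
  assumes "0 \<le> u" "u < N"
  shows "(u + -1) mod N = (if u = 0 then N - 1 else u - 1)"
proof (cases "u = 0")
  case True
  have "(-1) mod N = ((N - 1) + (-1) * N) mod N" by simp
  also have "\<dots> = (N - 1) mod N" by (rule mod_mult_self1)
  also have "\<dots> = N - 1" using assms by (intro mod_pos_pos_trivial) auto
  finally show ?thesis using True by simp
next
  case False thus ?thesis using assms by (simp add: mod_pos_pos_trivial)
qed

lemma mod_triv: "0 \<le> (u::int) \<Longrightarrow> u < N \<Longrightarrow> u mod N = u"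
  by (rule mod_pos_pos_trivial)

locale snake =
  fixes n :: nat and \<rho> :: "pt \<Rightarrow> pt"
  assumes n2: "n \<ge> 2" and rho: "\<rho> \<in> GS n"
begin

abbreviation NN :: int where "NN \<equiv> 2 * int n"

lemma NN4: "NN \<ge> 4" using n2 by simp

lemma perm: "\<rho> permutes mids n" using rho by (simp add: GS_def)

lemma allowed:
  assumes "x \<in> mids n"
  shows "black x \<Longrightarrow> \<rho> x \<in> {x, padd n x e3, padd n x e1}"
    and "\<not> black x \<Longrightarrow> \<rho> x \<in> {x, padd n x e3, padd n x e2}"
  using rho assms by (auto simp: GS_def)

lemma rho_mids: "x \<in> mids n \<Longrightarrow> \<rho> x \<in> mids n"
  by (simp add: permutes_in_image[OF perm])

definition Mv :: "pt set" where "Mv = {x \<in> mids n. \<rho> x \<noteq> x}"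

lemma permO: "\<rho> permutes Mv"
  using perm unfolding permutes_def Mv_def by auto

lemma finite_mids: "finite (mids n)"
proof -
  have "mids n \<subseteq> {0..<NN} \<times> {0..<NN}" by (auto simp: mids_iff)
  thus ?thesis by (rule finite_subset) auto
qed

lemma finO: "finite Mv" unfolding Mv_def using finite_mids by simp

lemma O_mids: "x \<in> Mv \<Longrightarrow> x \<in> mids n" by (simp add: Mv_def)

lemma rhoO: "x \<in> Mv \<Longrightarrow> \<rho> x \<in> Mv" by (simp add: permutes_in_image[OF permO])

definition dl :: "pt \<Rightarrow> int" where
  "dl x = (if \<rho> x = padd n x e1 then 2 else if \<rho> x = padd n x e3 then 1 else 0)"

lemma dl_cases:
  assumes x: "x \<in> Mv"
  shows "(dl x = 2 \<and> black x \<and> \<rho> x = padd n x e1) \<or> (dl x = 1 \<and> \<rho> x = padd n x e3) \<or>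
         (dl x = 0 \<and> \<not> black x \<and> \<rho> x = padd n x e2)"
proof -
  have xm: "x \<in> mids n" and nx: "\<rho> x \<noteq> x" using x by (auto simp: Mv_def)
  obtain a b where ab: "x = (a,b)" by (cases x)
  have r: "0 \<le> a" "a < NN" "0 \<le> b" "b < NN" "odd (a+b)" using xm ab by (auto simp: mids_iff)
  have ne13: "padd n x e1 \<noteq> padd n x e3" using r NN4 ab by (auto simp: padd_def e1_def e3_def mod_step mod_triv)
  have ne23: "padd n x e2 \<noteq> padd n x e3" using r NN4 ab by (auto simp: padd_def e2_def e3_def mod_step mod_triv)
  have ne12: "padd n x e2 \<noteq> padd n x e1" using r NN4 ab by (auto simp: padd_def e2_def e1_def mod_step mod_triv)
  show ?thesis
  proof (cases "black x")
    case True
    then show ?thesis using allowed(1)[OF xm] nx ne13 unfolding dl_def by auto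
  next
    case False
    then show ?thesis using allowed(2)[OF xm] nx ne13 ne23 ne12 unfolding dl_def by auto
  qed
qed

lemma Mv_coords:
  assumes "x \<in> Mv"
  shows "0 \<le> fst x" "fst x < NN" "0 \<le> snd x" "snd x < NN" "odd (fst x + snd x)"
  using O_mids[OF assms] by (auto simp: mids_iff)

lemma rho_fst: "x \<in> Mv \<Longrightarrow> fst (\<rho> x) = (fst x + dl x) mod NN"
  using dl_cases[of x] Mv_coords[of x] by (auto simp: e1_def e2_def e3_def mod_triv add.commute)

lemma rho_snd: "x \<in> Mv \<Longrightarrow> snd (\<rho> x) = (snd x + 2 - dl x) mod NN"
  using dl_cases[of x] Mv_coords[of x] by (auto simp: e1_def e2_def e3_def mod_triv add.commute)

lemma dl_range: "x \<in> Mv \<Longrightarrow> 0 \<le> dl x \<and> dl x \<le> 2"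
  using dl_cases[of x] by auto

lemma dl_black: "x \<in> Mv \<Longrightarrow> black x \<Longrightarrow> 1 \<le> dl x"
  using dl_cases[of x] by auto

lemma dl_white: "x \<in> Mv \<Longrightarrow> \<not> black x \<Longrightarrow> dl x \<le> 1"
  using dl_cases[of x] by auto

definition wr :: "pt \<Rightarrow> bool" where "wr x \<longleftrightarrow> NN \<le> fst x + dl x"

lemma rho_fst': "x \<in> Mv \<Longrightarrow> fst (\<rho> x) = fst x + dl x - (if wr x then NN else 0)"
  using rho_fst[of x] Mv_coords[of x] dl_range[of x] NN4 unfolding wr_def
  by (simp add: mod_step)

definition WW :: nat where "WW = card {x \<in> Mv. wr x}"

lemma sum_dl: "(\<Sum>x\<in>Mv. dl x) = NN * int WW"
proof -
  have bij: "bij_betw \<rho> Mv Mv" by (rule permutes_imp_bij[OF permO])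
  have "(\<Sum>x\<in>Mv. fst (\<rho> x)) = (\<Sum>x\<in>Mv. fst x)"
    by (rule sum.reindex_bij_betw[OF bij])
  also have "(\<Sum>x\<in>Mv. fst (\<rho> x)) = (\<Sum>x\<in>Mv. fst x + dl x - NN * of_bool (wr x))"
    by (rule sum.cong) (auto simp: rho_fst')
  also have "\<dots> = (\<Sum>x\<in>Mv. fst x) + (\<Sum>x\<in>Mv. dl x) - NN * (\<Sum>x\<in>Mv. of_bool (wr x))"
    by (simp add: sum.distrib sum_subtractf sum_distrib_left)
  finally have "(\<Sum>x\<in>Mv. dl x) = NN * (\<Sum>x\<in>Mv. of_bool (wr x))" by simp
  also have "(\<Sum>x\<in>Mv. of_bool (wr x) :: int) = int WW"
    using finO by (simp add: WW_def Int_def conj_commute)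
  finally show ?thesis .
qed

lemma padd_distinct:
  assumes "x \<in> mids n"
  shows "padd n x e1 \<noteq> x" "padd n x e2 \<noteq> x" "padd n x e3 \<noteq> x"
    "padd n x e1 \<noteq> padd n x e3" "padd n x e2 \<noteq> padd n x e3" "padd n x e1 \<noteq> padd n x e2"
proof -
  obtain a b where ab: "x = (a,b)" by (cases x)
  have r: "0 \<le> a" "a < NN" "0 \<le> b" "b < NN" using assms ab by (auto simp: mids_iff)
  have m1: "(a + 2) mod NN \<noteq> a" using r NN4 by (simp add: mod_step)
  have m2: "(b + 2) mod NN \<noteq> b" using r NN4 by (simp add: mod_step)
  have m3: "(b + 1) mod NN \<noteq> b" using r NN4 by (simp add: mod_step)
  have m4: "(a + 1) mod NN \<noteq> a" using r NN4 by (simp add: mod_step)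
  have m5: "(a + 1) mod NN \<noteq> (a + 2) mod NN" using r NN4 by (simp add: mod_step)
  show "padd n x e1 \<noteq> x" "padd n x e2 \<noteq> x" "padd n x e3 \<noteq> x"
    "padd n x e1 \<noteq> padd n x e3" "padd n x e2 \<noteq> padd n x e3" "padd n x e1 \<noteq> padd n x e2"
    using m1 m2 m3 m4 m5 r unfolding ab by (simp_all add: padd_def e1_def e2_def e3_def mod_triv)
qed

lemma cntA_eq: "cntA n \<rho> = card {x \<in> Mv. dl x = 2}"
proof -
  have "{x \<in> mids n. \<rho> x = padd n x e1} = {x \<in> Mv. dl x = 2}"
  proof (intro set_eqI iffI)
    fix x assume x: "x \<in> {x \<in> mids n. \<rho> x = padd n x e1}"
    thus "x \<in> {x \<in> Mv. dl x = 2}" using padd_distinct(1)[of x] unfolding Mv_def dl_def by auto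
  next
    fix x assume "x \<in> {x \<in> Mv. dl x = 2}"
    thus "x \<in> {x \<in> mids n. \<rho> x = padd n x e1}" using dl_cases[of x] O_mids[of x] by auto
  qed
  thus ?thesis by (simp add: cntA_def)
qed

lemma cntC_eq: "cntC n \<rho> = card {x \<in> Mv. dl x = 1}"
proof -
  have "{x \<in> mids n. \<rho> x = padd n x e3} = {x \<in> Mv. dl x = 1}"
  proof (intro set_eqI iffI)
    fix x assume x: "x \<in> {x \<in> mids n. \<rho> x = padd n x e3}"
    thus "x \<in> {x \<in> Mv. dl x = 1}" using padd_distinct(3,4)[of x] unfolding Mv_def dl_def by auto
  next
    fix x assume "x \<in> {x \<in> Mv. dl x = 1}"
    thus "x \<in> {x \<in> mids n. \<rho> x = padd n x e3}" using dl_cases[of x] O_mids[of x] by auto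
  qed
  thus ?thesis by (simp add: cntC_def)
qed

lemma cntB_eq: "cntB n \<rho> = card {x \<in> Mv. dl x = 0}"
proof -
  have "{x \<in> mids n. \<rho> x = padd n x e2} = {x \<in> Mv. dl x = 0}"
  proof (intro set_eqI iffI)
    fix x assume x: "x \<in> {x \<in> mids n. \<rho> x = padd n x e2}"
    thus "x \<in> {x \<in> Mv. dl x = 0}" using padd_distinct(2,5,6)[of x] unfolding Mv_def dl_def by auto
  next
    fix x assume "x \<in> {x \<in> Mv. dl x = 0}"
    thus "x \<in> {x \<in> mids n. \<rho> x = padd n x e2}" using dl_cases[of x] O_mids[of x] by auto
  qed
  thus ?thesis by (simp add: cntB_def)
qed

lemma sum_dl_cnt: "(\<Sum>x\<in>Mv. dl x) = 2 * int (cntA n \<rho>) + int (cntC n \<rho>)"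
proof -
  have "(\<Sum>x\<in>Mv. dl x) = (\<Sum>x\<in>Mv. 2 * of_bool (dl x = 2) + of_bool (dl x = 1))"
  proof (rule sum.cong[OF refl])
    fix x assume "x \<in> Mv"
    then consider "dl x = 0" | "dl x = 1" | "dl x = 2" using dl_range[of x] by linarith
    thus "dl x = 2 * of_bool (dl x = 2) + of_bool (dl x = 1)" by cases auto
  qed
  also have "\<dots> = 2 * (\<Sum>x\<in>Mv. of_bool (dl x = 2)) + (\<Sum>x\<in>Mv. of_bool (dl x = 1))"
    by (simp add: sum.distrib sum_distrib_left)
  also have "(\<Sum>x\<in>Mv. of_bool (dl x = 2) :: int) = int (cntA n \<rho>)"
    using finO by (simp add: cntA_eq Int_def conj_commute)
  also have "(\<Sum>x\<in>Mv. of_bool (dl x = 1) :: int) = int (cntC n \<rho>)"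
    using finO by (simp add: cntC_eq Int_def conj_commute)
  finally show ?thesis .
qed

lemma card_Mv_cnt: "card Mv = cntA n \<rho> + cntB n \<rho> + cntC n \<rho>"
proof -
  have "Mv = {x \<in> Mv. dl x = 2} \<union> {x \<in> Mv. dl x = 0} \<union> {x \<in> Mv. dl x = 1}"
  proof (intro set_eqI iffI)
    fix x assume "x \<in> Mv"
    then consider "dl x = 0" | "dl x = 1" | "dl x = 2" using dl_range[of x] by linarith
    thus "x \<in> {x \<in> Mv. dl x = 2} \<union> {x \<in> Mv. dl x = 0} \<union> {x \<in> Mv. dl x = 1}" using \<open>x \<in> Mv\<close> by cases auto
  qed auto
  hence "card Mv = card ({x \<in> Mv. dl x = 2} \<union> {x \<in> Mv. dl x = 0} \<union> {x \<in> Mv. dl x = 1})" by simp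
  also have "\<dots> = card ({x \<in> Mv. dl x = 2} \<union> {x \<in> Mv. dl x = 0}) + card {x \<in> Mv. dl x = 1}"
    by (rule card_Un_disjoint) (use finO in auto)
  also have "card ({x \<in> Mv. dl x = 2} \<union> {x \<in> Mv. dl x = 0}) = card {x \<in> Mv. dl x = 2} + card {x \<in> Mv. dl x = 0}"
    by (rule card_Un_disjoint) (use finO in auto)
  finally show ?thesis by (simp add: cntA_eq cntB_eq cntC_eq)
qed

definition lvl :: "pt \<Rightarrow> int" where "lvl x = (fst x + snd x) mod NN"

lemma lvl_range: "x \<in> Mv \<Longrightarrow> 0 \<le> lvl x \<and> lvl x < NN \<and> odd (lvl x)"
  using Mv_coords[of x] NN4 unfolding lvl_def by (simp add: odd_mod_even)

lemma lvl_rho: "x \<in> Mv \<Longrightarrow> lvl (\<rho> x) = (lvl x + 2) mod NN"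
proof -
  assume x: "x \<in> Mv"
  have "lvl (\<rho> x) = ((fst x + dl x) mod NN + (snd x + 2 - dl x) mod NN) mod NN"
    unfolding lvl_def using rho_fst[OF x] rho_snd[OF x] by simp
  also have "\<dots> = ((fst x + dl x) + (snd x + 2 - dl x)) mod NN" by (rule mod_add_eq)
  also have "\<dots> = ((fst x + snd x) + 2) mod NN" by (simp add: algebra_simps)
  also have "\<dots> = ((fst x + snd x) mod NN + 2) mod NN" by (rule mod_add_left_eq[symmetric])
  finally show ?thesis unfolding lvl_def .
qed

definition lev :: "int \<Rightarrow> pt set" where "lev c = {x \<in> Mv. lvl x = c}"

lemma lev_bij:
  assumes "0 \<le> c" "c < NN"
  shows "bij_betw \<rho> (lev c) (lev ((c + 2) mod NN))"
proof -
  have bij: "bij_betw \<rho> Mv Mv" by (rule permutes_imp_bij[OF permO])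
  have inj: "inj_on \<rho> (lev c)" using bij unfolding bij_betw_def lev_def by (auto intro: inj_on_subset)
  have "\<rho> ` lev c = lev ((c + 2) mod NN)"
  proof
    show "\<rho> ` lev c \<subseteq> lev ((c + 2) mod NN)" using lvl_rho rhoO unfolding lev_def by auto
  next
    show "lev ((c + 2) mod NN) \<subseteq> \<rho> ` lev c"
    proof
      fix y assume y: "y \<in> lev ((c + 2) mod NN)"
      have "y \<in> \<rho> ` Mv" using y bij unfolding lev_def bij_betw_def by auto
      then obtain x where x: "x \<in> Mv" "y = \<rho> x" by blast
      have e: "(lvl x + 2) mod NN = (c + 2) mod NN" using y x lvl_rho unfolding lev_def by auto
      have "lvl x = c" using e lvl_range[OF x(1)] assms NN4 by (simp add: mod_step split: if_splits)
      thus "y \<in> \<rho> ` lev c" using x unfolding lev_def by auto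
    qed
  qed
  thus ?thesis using inj unfolding bij_betw_def by simp
qed

definition mm :: nat where "mm = card (lev 1)"

lemma card_lev: "j < n \<Longrightarrow> card (lev (1 + 2 * int j)) = mm"
proof (induction j)
  case 0 thus ?case by (simp add: mm_def)
next
  case (Suc j)
  have "card (lev (1 + 2 * int j)) = card (lev ((1 + 2 * int j + 2) mod NN))"
    using lev_bij[of "1 + 2 * int j"] Suc.prems by (intro bij_betw_same_card) auto
  also have "(1 + 2 * int j + 2) mod NN = 1 + 2 * int (Suc j)"
    using Suc.prems by (subst mod_triv) auto
  finally show ?case using Suc by simp
qed

lemma lvl_odd_form:
  assumes x: "x \<in> Mv"
  obtains j where "j < n" "lvl x = 1 + 2 * int j"
proof -
  obtain c where c: "lvl x = 2 * c + 1" using lvl_range[OF x] by (meson oddE)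
  have "0 \<le> c" "c < int n" using lvl_range[OF x] c by auto
  thus ?thesis using that[of "nat c"] c by auto
qed

lemma card_lev_x: "x \<in> Mv \<Longrightarrow> card (lev (lvl x)) = mm"
  by (metis lvl_odd_form card_lev)

lemma card_Mv: "card Mv = n * mm"
proof -
  have "Mv = (\<Union>j\<in>{..<n}. lev (1 + 2 * int j))"
  proof
    show "Mv \<subseteq> (\<Union>j\<in>{..<n}. lev (1 + 2 * int j))"
    proof
      fix x assume x: "x \<in> Mv"
      obtain j where "j < n" "lvl x = 1 + 2 * int j" using lvl_odd_form[OF x] by blast
      thus "x \<in> (\<Union>j\<in>{..<n}. lev (1 + 2 * int j))" using x unfolding lev_def by auto
    qed
  qed (auto simp: lev_def)
  hence "card Mv = card (\<Union>j\<in>{..<n}. lev (1 + 2 * int j))" by simp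
  also have "\<dots> = (\<Sum>j<n. card (lev (1 + 2 * int j)))"
    by (rule card_UN_disjoint) (use finO in \<open>auto simp: lev_def\<close>)
  also have "\<dots> = (\<Sum>j<n. mm)" by (rule sum.cong) (auto simp: card_lev)
  finally show ?thesis by simp
qed

lemma lex_key:
  fixes l l' f f' N :: int
  assumes "0 \<le> f" "f < N" "0 \<le> f'" "f' < N"
  shows "l * N + f < l' * N + f' \<longleftrightarrow> l < l' \<or> (l = l' \<and> f < f')"
proof -
  have A: "l * N + g < l' * N + g'" if "l < l'" "g < N" "0 \<le> g'" for l l' g g'
  proof -
    have "(l + 1) * N \<le> l' * N" using that assms by (intro mult_right_mono) auto
    thus ?thesis using that by (simp add: algebra_simps)
  qed
  show ?thesis
  proof (cases "l < l'")
    case True thus ?thesis using A[of l l' f f'] assms by auto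
  next
    case False
    show ?thesis
    proof (cases "l = l'")
      case True thus ?thesis by auto
    next
      case False
      hence "l' < l" using \<open>\<not> l < l'\<close> by auto
      thus ?thesis using A[of l' l f' f] assms by auto
    qed
  qed
qed

definition key :: "pt \<Rightarrow> int" where "key x = lvl x * NN + fst x"

lemma key_less: "x \<in> Mv \<Longrightarrow> y \<in> Mv \<Longrightarrow> key x < key y \<longleftrightarrow> lvl x < lvl y \<or> (lvl x = lvl y \<and> fst x < fst y)"
  unfolding key_def by (rule lex_key) (auto dest: Mv_coords)

lemma same_lvl_fst:
  assumes x: "x \<in> Mv" and y: "y \<in> Mv" and l: "lvl x = lvl y" and f: "fst x = fst y"
  shows "x = y"
proof -
  have "(fst x + snd x) mod NN = (fst x + snd y) mod NN" using l f unfolding lvl_def by simp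
  hence "NN dvd (fst x + snd x) - (fst x + snd y)" by (simp add: mod_eq_dvd_iff)
  hence d: "NN dvd snd x - snd y" by simp
  have "snd x - snd y = 0"
  proof (rule ccontr)
    assume "snd x - snd y \<noteq> 0"
    hence "\<bar>NN\<bar> \<le> \<bar>snd x - snd y\<bar>" using d by (rule dvd_imp_le_int)
    thus False using Mv_coords[OF x] Mv_coords[OF y] by auto
  qed
  thus ?thesis using f by (simp add: prod_eq_iff)
qed

lemma key_inj: "inj_on key Mv"
proof (rule inj_onI)
  fix x y assume xy: "x \<in> Mv" "y \<in> Mv" "key x = key y"
  hence "\<not> key x < key y" "\<not> key y < key x" by auto
  hence "lvl x = lvl y" "fst x = fst y" using key_less[OF xy(1,2)] key_less[OF xy(2,1)] by auto
  thus "x = y" using same_lvl_fst xy by blast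
qed

lemma lvl_rho_cases:
  assumes x: "x \<in> Mv"
  shows "lvl x = NN - 1 \<Longrightarrow> lvl (\<rho> x) = 1"
    and "lvl x \<noteq> NN - 1 \<Longrightarrow> lvl (\<rho> x) = lvl x + 2 \<and> lvl x + 2 < NN"
proof -
  have r: "0 \<le> lvl x" "lvl x < NN" "odd (lvl x)" using lvl_range[OF x] by auto
  have eN: "even NN" by simp
  show "lvl x = NN - 1 \<Longrightarrow> lvl (\<rho> x) = 1" using lvl_rho[OF x] r NN4 by (simp add: mod_step)
  assume ne: "lvl x \<noteq> NN - 1"
  have "lvl x \<noteq> NN - 2" using r(3) eN by (metis even_diff odd_one dvd_add_right_iff diff_add_cancel even_numeral)
  hence lt: "lvl x + 2 < NN" using ne r by linarith
  thus "lvl (\<rho> x) = lvl x + 2 \<and> lvl x + 2 < NN" using lvl_rho[OF x] r by (simp add: mod_triv)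
qed

definition Inv :: "(pt \<times> pt) set" where
  "Inv = {(x,y) \<in> Mv \<times> Mv. key x < key y \<and> key (\<rho> y) < key (\<rho> x)}"
definition Inv1 :: "(pt \<times> pt) set" where
  "Inv1 = (Mv - lev (NN - 1)) \<times> lev (NN - 1)"
definition Inv2 :: "(pt \<times> pt) set" where
  "Inv2 = {(x,y) \<in> Mv \<times> Mv. lvl x = lvl y \<and> fst x < fst y \<and> fst (\<rho> y) < fst (\<rho> x)}"

lemma Inv_split: "Inv = Inv1 \<union> Inv2"
proof (intro set_eqI)
  fix z :: "pt \<times> pt"
  obtain x y where z: "z = (x,y)" by (cases z)
  show "z \<in> Inv \<longleftrightarrow> z \<in> Inv1 \<union> Inv2"
  proof (cases "x \<in> Mv \<and> y \<in> Mv")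
    case False thus ?thesis unfolding z Inv_def Inv1_def Inv2_def lev_def by auto
  next
    case True
    hence x: "x \<in> Mv" and y: "y \<in> Mv" by auto
    have rx: "\<rho> x \<in> Mv" and ry: "\<rho> y \<in> Mv" using rhoO x y by auto
    have kxy: "key x < key y \<longleftrightarrow> lvl x < lvl y \<or> (lvl x = lvl y \<and> fst x < fst y)" by (rule key_less[OF x y])
    have kr: "key (\<rho> y) < key (\<rho> x) \<longleftrightarrow> lvl (\<rho> y) < lvl (\<rho> x) \<or> (lvl (\<rho> y) = lvl (\<rho> x) \<and> fst (\<rho> y) < fst (\<rho> x))"
      by (rule key_less[OF ry rx])
    have lx: "0 \<le> lvl x" "lvl x < NN" "odd (lvl x)" and ly: "0 \<le> lvl y" "lvl y < NN" "odd (lvl y)"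
      using lvl_range x y by auto
    have lx1: "1 \<le> lvl x" using lx by (metis dual_order.order_iff_strict even_zero int_one_le_iff_zero_less)
    consider "lvl x = lvl y" | "lvl x < lvl y" | "lvl y < lvl x" by linarith
    thus ?thesis
    proof cases
      case 1
      hence "lvl (\<rho> x) = lvl (\<rho> y)" using lvl_rho x y by simp
      thus ?thesis using 1 kxy kr unfolding z Inv_def Inv1_def Inv2_def lev_def using x y by auto
    next
      case 2
      show ?thesis
      proof (cases "lvl y = NN - 1")
        case True
        have "lvl x \<noteq> NN - 1" using 2 True by simp
        hence "lvl (\<rho> x) = lvl x + 2" using lvl_rho_cases(2)[OF x] by simp
        moreover have "lvl (\<rho> y) = 1" using lvl_rho_cases(1)[OF y True] .
        ultimately have "key (\<rho> y) < key (\<rho> x)" using kr lx1 by simp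
        thus ?thesis using 2 True kxy x y \<open>lvl x \<noteq> NN - 1\<close> unfolding z Inv_def Inv1_def Inv2_def lev_def by auto
      next
        case False
        have "lvl x \<noteq> NN - 1" using 2 ly by simp
        hence "lvl (\<rho> x) = lvl x + 2" using lvl_rho_cases(2)[OF x] by simp
        moreover have "lvl (\<rho> y) = lvl y + 2" using lvl_rho_cases(2)[OF y False] by simp
        ultimately have "\<not> key (\<rho> y) < key (\<rho> x)" using kr 2 by simp
        thus ?thesis using 2 False x y unfolding z Inv_def Inv1_def Inv2_def lev_def by auto
      qed
    next
      case 3
      have "\<not> key x < key y" using kxy 3 by auto
      moreover have "lvl x \<noteq> NN - 1 \<or> lvl y \<noteq> NN - 1" using 3 by auto
      moreover have "lvl y = NN - 1 \<Longrightarrow> False" using 3 lx by simp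
      ultimately show ?thesis using 3 unfolding z Inv_def Inv1_def Inv2_def lev_def by auto
    qed
  qed
qed

lemma card_Inv: "card Inv = card Inv1 + card Inv2"
proof -
  have "Inv1 \<inter> Inv2 = {}" unfolding Inv1_def Inv2_def lev_def by auto
  moreover have "finite Inv1" "finite Inv2" using finO unfolding Inv1_def Inv2_def lev_def
    by (auto intro: finite_subset[of _ "Mv \<times> Mv"])
  ultimately show ?thesis using Inv_split by (simp add: card_Un_disjoint)
qed

lemma card_Inv1: "card Inv1 = (n * mm - mm) * mm"
proof -
  have top: "NN - 1 = 1 + 2 * int (n - 1)" using n2 by simp
  have cl: "card (lev (NN - 1)) = mm" unfolding top using n2 by (intro card_lev) auto
  have sub: "lev (NN - 1) \<subseteq> Mv" unfolding lev_def by auto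
  have "card (Mv - lev (NN - 1)) = n * mm - mm"
    using card_Diff_subset[OF finite_subset[OF sub finO] sub] cl card_Mv by simp
  thus ?thesis unfolding Inv1_def using cl by (simp add: card_cartesian_product)
qed

definition QQ :: "(pt \<times> pt) set" where
  "QQ = {(x,y) \<in> Mv \<times> Mv. lvl x = lvl y \<and> fst x < fst y}"

definition cr :: "pt \<times> pt \<Rightarrow> bool" where
  "cr q \<longleftrightarrow> fst (snd q) + dl (snd q) < fst (fst q) + dl (fst q) \<or>
           fst (fst q) + dl (fst q) + NN < fst (snd q) + dl (snd q)"

lemma finQQ: "finite QQ" using finO unfolding QQ_def by (auto intro: finite_subset[of _ "Mv \<times> Mv"])

lemma pair_lemma:
  assumes q: "(x,y) \<in> QQ"
  shows "fst (\<rho> y) < fst (\<rho> x) \<longleftrightarrow> ((wr x \<noteq> wr y) \<noteq> cr (x,y))"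
proof -
  have x: "x \<in> Mv" and y: "y \<in> Mv" and l: "lvl x = lvl y" and f: "fst x < fst y" using q by (auto simp: QQ_def)
  have "x \<noteq> y" using f by auto
  hence "\<rho> x \<noteq> \<rho> y" using permO by (metis permutes_inj injD)
  moreover have "lvl (\<rho> x) = lvl (\<rho> y)" using l lvl_rho x y by simp
  ultimately have ne: "fst (\<rho> x) \<noteq> fst (\<rho> y)" using same_lvl_fst rhoO x y by blast
  have fx: "fst (\<rho> x) = fst x + dl x - (if wr x then NN else 0)" by (rule rho_fst'[OF x])
  have fy: "fst (\<rho> y) = fst y + dl y - (if wr y then NN else 0)" by (rule rho_fst'[OF y])
  have cx: "0 \<le> fst x" "fst x < NN" using Mv_coords[OF x] by auto
  have cy: "0 \<le> fst y" "fst y < NN" using Mv_coords[OF y] by auto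
  have dx: "0 \<le> dl x" "dl x \<le> 2" using dl_range[OF x] by auto
  have dy: "0 \<le> dl y" "dl y \<le> 2" using dl_range[OF y] by auto
  show ?thesis
    using ne fx fy cx cy dx dy f NN4 unfolding cr_def wr_def by (auto split: if_splits)
qed

lemma Inv2_QQ: "Inv2 = {q \<in> QQ. fst (\<rho> (snd q)) < fst (\<rho> (fst q))}"
  unfolding Inv2_def QQ_def by auto

lemma Inv2_parity:
  "card Inv2 mod 2 = (\<Sum>q\<in>QQ. of_bool (wr (fst q)) + of_bool (wr (snd q)) + of_bool (cr q) :: nat) mod 2"
proof -
  have "card Inv2 = (\<Sum>q\<in>QQ. of_bool (fst (\<rho> (snd q)) < fst (\<rho> (fst q))) :: nat)"
    unfolding Inv2_QQ using finQQ by (simp add: Int_def conj_commute)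
  also have "\<dots> mod 2 = (\<Sum>q\<in>QQ. (of_bool (fst (\<rho> (snd q)) < fst (\<rho> (fst q))) :: nat) mod 2) mod 2"
    by (simp add: mod_sum_eq)
  also have "(\<Sum>q\<in>QQ. (of_bool (fst (\<rho> (snd q)) < fst (\<rho> (fst q))) :: nat) mod 2) =
             (\<Sum>q\<in>QQ. (of_bool (wr (fst q)) + of_bool (wr (snd q)) + of_bool (cr q)) mod 2)"
  proof (rule sum.cong[OF refl])
    fix q assume "q \<in> QQ"
    then obtain x y where q: "q = (x,y)" "(x,y) \<in> QQ" by (cases q) auto
    show "(of_bool (fst (\<rho> (snd q)) < fst (\<rho> (fst q))) :: nat) mod 2 =
          (of_bool (wr (fst q)) + of_bool (wr (snd q)) + of_bool (cr q)) mod 2"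
      using pair_lemma[OF q(2)] unfolding q(1) by (cases "wr x"; cases "wr y"; cases "cr (x,y)") auto
  qed
  also have "(\<Sum>q\<in>QQ. (of_bool (wr (fst q)) + of_bool (wr (snd q)) + of_bool (cr q) :: nat) mod 2) mod 2
      = (\<Sum>q\<in>QQ. of_bool (wr (fst q)) + of_bool (wr (snd q)) + of_bool (cr q) :: nat) mod 2"
    by (simp add: mod_sum_eq)
  finally show ?thesis .
qed

lemma sum_wr_pairs:
  "(\<Sum>q\<in>QQ. of_bool (wr (fst q)) + of_bool (wr (snd q)) :: nat) = WW * (mm - 1)"
proof -
  define Q' where "Q' = {(x,y) \<in> Mv \<times> Mv. lvl x = lvl y \<and> fst y < fst x}"
  define R where "R = Sigma Mv (\<lambda>x. lev (lvl x) - {x})"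
  have finQ': "finite Q'" using finO unfolding Q'_def by (auto intro: finite_subset[of _ "Mv \<times> Mv"])
  have sw: "(\<Sum>q\<in>QQ. of_bool (wr (snd q)) :: nat) = (\<Sum>q\<in>Q'. of_bool (wr (fst q)))"
  proof -
    have "bij_betw prod.swap QQ Q'" unfolding QQ_def Q'_def
      by (rule bij_betwI[where g = prod.swap]) auto
    from sum.reindex_bij_betw[OF this, of "\<lambda>q. of_bool (wr (fst q)) :: nat"]
    show ?thesis by (simp add: case_prod_beta)
  qed
  have RU: "R = QQ \<union> Q'"
  proof (intro set_eqI iffI)
    fix z assume "z \<in> R"
    then obtain x y where z: "z = (x,y)" "x \<in> Mv" "y \<in> Mv" "lvl y = lvl x" "y \<noteq> x"
      unfolding R_def lev_def by auto
    hence "fst x \<noteq> fst y" using same_lvl_fst by metis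
    thus "z \<in> QQ \<union> Q'" using z unfolding QQ_def Q'_def by auto
  next
    fix z assume "z \<in> QQ \<union> Q'"
    thus "z \<in> R" unfolding QQ_def Q'_def R_def lev_def by auto
  qed
  have disj: "QQ \<inter> Q' = {}" unfolding QQ_def Q'_def by auto
  have "(\<Sum>q\<in>QQ. of_bool (wr (fst q)) + of_bool (wr (snd q)) :: nat)
        = (\<Sum>q\<in>QQ. of_bool (wr (fst q))) + (\<Sum>q\<in>Q'. of_bool (wr (fst q)))"
    by (simp add: sum.distrib sw)
  also have "\<dots> = (\<Sum>q\<in>R. of_bool (wr (fst q)))"
    unfolding RU by (rule sum.union_disjoint[symmetric]) (use finQQ finQ' disj in auto)
  also have "\<dots> = (\<Sum>(x,y)\<in>R. of_bool (wr x))" by (simp add: case_prod_beta)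
  also have "\<dots> = (\<Sum>x\<in>Mv. \<Sum>y\<in>lev (lvl x) - {x}. of_bool (wr x))"
    unfolding R_def by (rule sum.Sigma[symmetric]) (use finO in \<open>auto simp: lev_def\<close>)
  also have "\<dots> = (\<Sum>x\<in>Mv. of_bool (wr x) * (mm - 1))"
  proof (rule sum.cong[OF refl])
    fix x assume x: "x \<in> Mv"
    have "x \<in> lev (lvl x)" using x unfolding lev_def by auto
    hence "card (lev (lvl x) - {x}) = mm - 1" using card_lev_x[OF x] by simp
    thus "(\<Sum>y\<in>lev (lvl x) - {x}. of_bool (wr x)) = of_bool (wr x) * (mm - 1)" by simp
  qed
  also have "\<dots> = WW * (mm - 1)"
    using finO by (simp add: WW_def Int_def conj_commute)
  finally show ?thesis .
qed

lemma mod_m1: "0 \<le> (u::int) \<Longrightarrow> u < N \<Longrightarrow> (u - 1) mod N = (if u = 0 then N - 1 else u - 1)"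
  using mod_step_m[of u N] by simp

lemma snd_rel:
  fixes s s' u N :: int
  assumes "0 \<le> s'" "s' < N" "(u + s) mod N = (u + 1 + s') mod N"
  shows "s' = (s - 1) mod N"
proof -
  have "(s - 1) mod N = ((u + s) - (u + 1)) mod N" by (simp add: algebra_simps)
  also have "\<dots> = ((u + s) mod N - (u + 1)) mod N" by (simp add: mod_diff_left_eq)
  also have "\<dots> = ((u + 1 + s') mod N - (u + 1)) mod N" using assms(3) by simp
  also have "\<dots> = ((u + 1 + s') - (u + 1)) mod N" by (simp add: mod_diff_left_eq)
  also have "\<dots> = s'" using assms by (simp add: mod_triv)
  finally show ?thesis by simp
qed

lemma cross_char:
  assumes q: "(x,y) \<in> QQ" and c: "cr (x,y)"
  shows "(black x \<and> fst y = fst x + 1 \<and> snd y = (snd x - 1) mod NN \<and> dl x = 2 \<and> dl y = 0) \<or>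
         (\<not> black x \<and> fst x = 0 \<and> fst y = NN - 1 \<and> snd x = (snd y - 1) mod NN \<and> dl x = 0 \<and> dl y = 2)"
proof -
  have x: "x \<in> Mv" and y: "y \<in> Mv" and l: "lvl x = lvl y" and f: "fst x < fst y" using q by (auto simp: QQ_def)
  have cx: "0 \<le> fst x" "fst x < NN" "0 \<le> snd x" "snd x < NN" using Mv_coords[OF x] by auto
  have cy: "0 \<le> fst y" "fst y < NN" "0 \<le> snd y" "snd y < NN" using Mv_coords[OF y] by auto
  have dx: "0 \<le> dl x" "dl x \<le> 2" using dl_range[OF x] by auto
  have dy: "0 \<le> dl y" "dl y \<le> 2" using dl_range[OF y] by auto
  have lv: "(fst x + snd x) mod NN = (fst y + snd y) mod NN" using l unfolding lvl_def .
  consider "fst y + dl y < fst x + dl x" | "fst x + dl x + NN < fst y + dl y" using c unfolding cr_def by auto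
  thus ?thesis
  proof cases
    case 1
    hence a: "fst y = fst x + 1" "dl x = 2" "dl y = 0" using f dx dy by linarith+
    have "black x" using dl_cases[OF x] a by auto
    moreover have "snd y = (snd x - 1) mod NN" using snd_rel[of "snd y" NN "fst x" "snd x"] cy lv a by simp
    ultimately show ?thesis using a by simp
  next
    case 2
    hence a: "fst x = 0" "fst y = NN - 1" "dl x = 0" "dl y = 2" using f dx dy cx cy by linarith+
    have "\<not> black x" using dl_cases[OF x] a by auto
    moreover have "snd x = (snd y - 1) mod NN"
    proof -
      have "(NN - 1 + snd y) mod NN = ((snd y - 1) + NN) mod NN" by (simp add: algebra_simps)
      also have "\<dots> = (snd y - 1) mod NN" by (rule mod_add_self2)
      finally have "(NN - 1 + snd y) mod NN = (snd y - 1) mod NN" .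
      moreover have "(fst x + snd x) mod NN = snd x" using a cx by (simp add: mod_triv)
      ultimately show ?thesis using lv a by simp
    qed
    ultimately show ?thesis using a by simp
  qed
qed

definition CV :: "pt set" where
  "CV = {v \<in> verts n. \<rho> (padd n v (-1, 0)) = padd n v (1, 0) \<and> \<rho> (padd n v (0, -1)) = padd n v (0, 1)}"

definition QC :: "(pt \<times> pt) set" where "QC = {q \<in> QQ. cr q}"

definition fmap :: "pt \<Rightarrow> pt \<times> pt" where
  "fmap v = (if fst v = 0 then (padd n v (0, -1), padd n v (-1, 0)) else (padd n v (-1, 0), padd n v (0, -1)))"

definition gmap :: "pt \<times> pt \<Rightarrow> pt" where
  "gmap q = (if black (fst q) then padd n (fst q) (1, 0) else padd n (snd q) (1, 0))"

lemma CV_facts: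
  assumes v: "v \<in> CV" and ab: "v = (a, b)"
  shows "padd n v (-1, 0) \<in> Mv" "padd n v (0, -1) \<in> Mv"
    "dl (padd n v (-1, 0)) = 2" "dl (padd n v (0, -1)) = 0"
    "padd n v (-1, 0) = (if a = 0 then NN - 1 else a - 1, b)"
    "padd n v (0, -1) = (a, (b - 1) mod NN)"
    "lvl (padd n v (-1, 0)) = lvl (padd n v (0, -1))"
    "0 \<le> a" "a < NN" "0 \<le> b" "b < NN" "even a" "even b"
proof -
  have vv: "v \<in> verts n" and r1: "\<rho> (padd n v (-1, 0)) = padd n v (1, 0)" and r2: "\<rho> (padd n v (0, -1)) = padd n v (0, 1)"
    using v unfolding CV_def by auto
  have c: "0 \<le> a" "a < NN" "0 \<le> b" "b < NN" "even a" "even b" using vv ab by (auto simp: verts_iff)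
  thus "0 \<le> a" "a < NN" "0 \<le> b" "b < NN" "even a" "even b" by auto
  have eN: "even NN" by simp
  have oa: "odd (a + 1)" and ob: "odd (b + 1)" using c by auto
  have "a + 1 \<noteq> NN" proof assume "a + 1 = NN" thus False using oa eN by simp qed
  moreover have "b + 1 \<noteq> NN" proof assume "b + 1 = NN" thus False using ob eN by simp qed
  ultimately have a1: "a + 1 < NN" and b1: "b + 1 < NN" using c by linarith+
  have L: "padd n v (-1, 0) = (if a = 0 then NN - 1 else a - 1, b)"
    using c ab by (simp add: padd_def mod_triv mod_m1)
  show "padd n v (-1, 0) = (if a = 0 then NN - 1 else a - 1, b)" by (rule L)
  have D: "padd n v (0, -1) = (a, (b - 1) mod NN)"
    using c ab by (simp add: padd_def mod_triv)
  show "padd n v (0, -1) = (a, (b - 1) mod NN)" by (rule D)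
  have R: "padd n v (1, 0) = (a + 1, b)" using c ab a1 by (simp add: padd_def mod_triv)
  have U: "padd n v (0, 1) = (a, b + 1)" using c ab b1 by (simp add: padd_def mod_triv)
  have Lm: "padd n v (-1, 0) \<in> mids n" using L c NN4 by (auto simp: mids_iff)
  have Dm: "padd n v (0, -1) \<in> mids n" using D c NN4 by (auto simp: mids_iff mod_m1)
  have "\<rho> (padd n v (-1, 0)) \<noteq> padd n v (-1, 0)" using r1 R L c NN4 by auto
  thus LM: "padd n v (-1, 0) \<in> Mv" using Lm unfolding Mv_def by auto
  have "\<rho> (padd n v (0, -1)) \<noteq> padd n v (0, -1)" using r2 U D c NN4 by (auto simp: mod_m1)
  thus DM: "padd n v (0, -1) \<in> Mv" using Dm unfolding Mv_def by auto
  have "padd n (padd n v (-1, 0)) e1 = (a + 1, b)"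
    using L c a1 NN4 by (auto simp: e1_def padd_def mod_triv mod_step)
  thus "dl (padd n v (-1, 0)) = 2" using r1 R unfolding dl_def by simp
  have "padd n (padd n v (0, -1)) e1 \<noteq> (a, b + 1)" using D c NN4 by (auto simp: e1_def padd_def mod_step)
  moreover have "padd n (padd n v (0, -1)) e3 \<noteq> (a, b + 1)" using D c a1 NN4 by (auto simp: e3_def padd_def mod_triv)
  ultimately show "dl (padd n v (0, -1)) = 0" using r2 U unfolding dl_def by auto
  have "lvl (padd n v (-1, 0)) = ((a - 1) mod NN + b) mod NN"
    using c ab unfolding lvl_def by (simp add: padd_def mod_triv)
  also have "\<dots> = (a - 1 + b) mod NN" by (simp add: mod_add_left_eq)
  also have "\<dots> = (a + (b - 1)) mod NN" by (simp add: algebra_simps)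
  also have "\<dots> = (a + (b - 1) mod NN) mod NN" by (simp add: mod_add_right_eq)
  also have "\<dots> = lvl (padd n v (0, -1))" unfolding lvl_def D by simp
  finally show "lvl (padd n v (-1, 0)) = lvl (padd n v (0, -1))" .
qed

lemma f_in:
  assumes v: "v \<in> CV"
  shows "fmap v \<in> QC \<and> gmap (fmap v) = v"
proof -
  obtain a b where ab: "v = (a, b)" by (cases v)
  note F = CV_facts[OF v ab]
  show ?thesis
  proof (cases "a = 0")
    case True
    have fm: "fmap v = (padd n v (0, -1), padd n v (-1, 0))" using True ab unfolding fmap_def by simp
    have "fmap v \<in> QQ" using fm F True NN4 unfolding QQ_def by auto
    moreover have "cr (fmap v)" using fm F True unfolding cr_def by simp
    moreover have "gmap (fmap v) = v"
    proof -
      have "\<not> black (padd n v (0, -1))" using F(6) True unfolding black_def by simp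
      hence "gmap (fmap v) = padd n (NN - 1, b) (1, 0)" using fm F(5) True unfolding gmap_def by simp
      also have "\<dots> = (0, b)" using F by (simp add: padd_def mod_triv)
      finally show ?thesis using ab True by simp
    qed
    ultimately show ?thesis unfolding QC_def by simp
  next
    case False
    have fm: "fmap v = (padd n v (-1, 0), padd n v (0, -1))" using False ab unfolding fmap_def by simp
    have "fmap v \<in> QQ" using fm F False NN4 unfolding QQ_def by auto
    moreover have "cr (fmap v)" using fm F False unfolding cr_def by simp
    moreover have "gmap (fmap v) = v"
    proof -
      have "black (padd n v (-1, 0))" using F(5,12) False unfolding black_def by simp
      hence "gmap (fmap v) = padd n (a - 1, b) (1, 0)" using fm F(5) False unfolding gmap_def by simp
      also have "\<dots> = (a, b)" using F by (simp add: padd_def mod_triv)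
      finally show ?thesis using ab by simp
    qed
    ultimately show ?thesis unfolding QC_def by simp
  qed
qed

lemma neg1_mod: "0 < (N::int) \<Longrightarrow> (-1) mod N = N - 1"
  using mod_m1[of 0 N] by simp

lemma g_in:
  assumes q: "q \<in> QC"
  shows "gmap q \<in> CV \<and> fmap (gmap q) = q"
proof -
  obtain x y where xy: "q = (x, y)" by (cases q)
  have qq: "(x,y) \<in> QQ" and c: "cr (x,y)" using q xy unfolding QC_def by auto
  have x: "x \<in> Mv" and y: "y \<in> Mv" using qq unfolding QQ_def by auto
  have cx: "0 \<le> fst x" "fst x < NN" "0 \<le> snd x" "snd x < NN" "odd (fst x + snd x)" using Mv_coords[OF x] by auto
  have cy: "0 \<le> fst y" "fst y < NN" "0 \<le> snd y" "snd y < NN" "odd (fst y + snd y)" using Mv_coords[OF y] by auto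
  have eN: "even NN" by simp
  consider (A) "black x" "fst y = fst x + 1" "snd y = (snd x - 1) mod NN" "dl x = 2" "dl y = 0"
    | (B) "\<not> black x" "fst x = 0" "fst y = NN - 1" "snd x = (snd y - 1) mod NN" "dl x = 0" "dl y = 2"
    using cross_char[OF qq c] by blast
  thus ?thesis
  proof cases
    case A
    obtain p s where ps: "x = (p, s)" by (cases x)
    have pe: "odd p" "even s" using A(1) cx(5) ps unfolding black_def by auto
    have p1: "p + 1 < NN" using A(2) cy ps by simp
    have ye: "y = (p + 1, (s - 1) mod NN)" using A(2,3) ps by (simp add: prod_eq_iff)
    have rx: "\<rho> x = padd n x e1" and ry: "\<rho> y = padd n y e2" using dl_cases[OF x] dl_cases[OF y] A by auto
    have g: "gmap q = (p + 1, s)" using A(1) xy ps cx p1 by (simp add: gmap_def padd_def mod_triv)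
    have vv: "(p + 1, s) \<in> verts n" using pe cx ps p1 by (auto simp: verts_iff)
    have L: "padd n (p + 1, s) (-1, 0) = x" using ps cx by (simp add: padd_def mod_triv)
    have D: "padd n (p + 1, s) (0, -1) = y" using ye ps cx p1 by (simp add: padd_def mod_triv)
    have R: "\<rho> x = padd n (p + 1, s) (1, 0)" using rx ps cx by (simp add: padd_def e1_def mod_triv add.commute)
    have U: "\<rho> y = padd n (p + 1, s) (0, 1)"
    proof -
      have "\<rho> y = (p + 1, ((s - 1) mod NN + 2) mod NN)" using ry ye p1 cx ps by (simp add: padd_def e2_def mod_triv)
      also have "((s - 1) mod NN + 2) mod NN = (s - 1 + 2) mod NN" by (rule mod_add_left_eq)
      also have "s - 1 + 2 = s + 1" by simp
      finally show ?thesis using p1 cx ps by (simp add: padd_def mod_triv add.commute)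
    qed
    have "gmap q \<in> CV" unfolding g CV_def using vv L D R U by simp
    moreover have "fmap (gmap q) = q" unfolding g fmap_def using L D xy pe cx ps by auto
    ultimately show ?thesis by simp
  next
    case B
    obtain t where yt: "y = (NN - 1, t)" using B(3) by (cases y) auto
    have te: "even t" using cy(5) yt eN by auto
    have xe: "x = (0, (t - 1) mod NN)" using B(2,4) yt by (simp add: prod_eq_iff)
    have rx: "\<rho> x = padd n x e2" and ry: "\<rho> y = padd n y e1" using dl_cases[OF x] dl_cases[OF y] B by auto
    have byy: "black y" using yt eN unfolding black_def by simp
    have g: "gmap q = (0, t)" using B(1) xy yt cy by (simp add: gmap_def padd_def mod_triv)
    have vv: "(0, t) \<in> verts n" using te cy yt NN4 by (auto simp: verts_iff)
    have L: "padd n (0, t) (-1, 0) = y" using yt cy NN4 by (simp add: padd_def mod_triv neg1_mod)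
    have D: "padd n (0, t) (0, -1) = x" using xe cy yt by (simp add: padd_def mod_triv)
    have R: "\<rho> y = padd n (0, t) (1, 0)" using ry yt cy NN4 by (simp add: padd_def e1_def mod_triv mod_step)
    have U: "\<rho> x = padd n (0, t) (0, 1)"
    proof -
      have "\<rho> x = (0, ((t - 1) mod NN + 2) mod NN)" using rx xe NN4 by (simp add: padd_def e2_def)
      also have "((t - 1) mod NN + 2) mod NN = (t - 1 + 2) mod NN" by (rule mod_add_left_eq)
      also have "t - 1 + 2 = t + 1" by simp
      finally show ?thesis by (simp add: padd_def)
    qed
    have "gmap q \<in> CV" unfolding g CV_def using vv L D R U by simp
    moreover have "fmap (gmap q) = q" unfolding g fmap_def using L D xy by auto
    ultimately show ?thesis by simp
  qed
qed

lemma card_QC: "card QC = crossings n \<rho>"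
proof -
  have "bij_betw gmap QC CV"
    by (rule bij_betw_byWitness[where f' = fmap]) (use f_in g_in in auto)
  hence "card QC = card CV" by (rule bij_betw_same_card)
  thus ?thesis unfolding crossings_def CV_def by simp
qed

lemma pow_parity: "(k::nat) mod 2 = k' mod 2 \<Longrightarrow> ((-1)::int) ^ k = (-1) ^ k'"
  by (metis minus_one_power_iff even_iff_mod_2_eq_zero)

lemma sign_formula:
  "sign \<rho> = (-1) ^ ((n * mm - mm) * mm + WW * (mm - 1) + crossings n \<rho>)"
proof -
  have "sign \<rho> = (-1) ^ card Inv"
    unfolding Inv_def by (rule sign_inversions[OF permO finO key_inj])
  also have "card Inv = card Inv1 + card Inv2" by (rule card_Inv)
  also have "(-1 :: int) ^ (card Inv1 + card Inv2) = (-1) ^ ((n * mm - mm) * mm + WW * (mm - 1) + crossings n \<rho>)"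
  proof (rule pow_parity)
    have s: "(\<Sum>q\<in>QQ. of_bool (wr (fst q)) + of_bool (wr (snd q)) + of_bool (cr q) :: nat)
          = WW * (mm - 1) + crossings n \<rho>"
    proof -
      have "(\<Sum>q\<in>QQ. of_bool (wr (fst q)) + of_bool (wr (snd q)) + of_bool (cr q) :: nat)
          = (\<Sum>q\<in>QQ. of_bool (wr (fst q)) + of_bool (wr (snd q)) :: nat) + (\<Sum>q\<in>QQ. of_bool (cr q))"
        by (simp add: sum.distrib)
      also have "(\<Sum>q\<in>QQ. of_bool (cr q) :: nat) = card QC"
        using finQQ unfolding QC_def by (simp add: Int_def conj_commute)
      finally show ?thesis using sum_wr_pairs card_QC by simp
    qed
    have "card Inv2 mod 2 = (WW * (mm - 1) + crossings n \<rho>) mod 2" using Inv2_parity s by simp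
    thus "(card Inv1 + card Inv2) mod 2 = ((n * mm - mm) * mm + WW * (mm - 1) + crossings n \<rho>) mod 2"
      using card_Inv1 by (metis add.assoc mod_add_right_eq)
  qed
  finally show ?thesis .
qed

lemma D1: "2 * int (cntA n \<rho>) + int (cntC n \<rho>) = NN * int WW"
  using sum_dl sum_dl_cnt by simp

lemma D2: "2 * int (cntB n \<rho>) + int (cntC n \<rho>) = NN * (int mm - int WW)"
proof -
  have "int (card Mv) = int n * int mm" using card_Mv by simp
  hence "2 * int (cntB n \<rho>) + int (cntC n \<rho>) = 2 * (int n * int mm) - (2 * int (cntA n \<rho>) + int (cntC n \<rho>))"
    using card_Mv_cnt by simp
  thus ?thesis using D1 by (simp add: algebra_simps)
qed

end


lemma final_parity:
  fixes n W h S :: nat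
  assumes "n \<ge> 1"
  shows "(\<Sum>t1 \<in> {0, 1::nat}. \<Sum>t2 \<in> {0, 1::nat}.
       (1 / 2 * (-1) ^ ((t1 + n + 1) * (t2 + n + 1))) *
       (of_int ((-1) ^ ((n * (W + h) - (W + h)) * (W + h) + W * (W + h - 1) + S)) * (-1) ^ (t1 * W + t2 * h)))
     = ((-1) ^ S :: complex)"
proof -
  obtain k where n: "n = Suc k" using assms by (cases n) auto
  have e: "n * (W + h) - (W + h) = k * (W + h)" unfolding n by simp
  show ?thesis
  proof (cases "W + h = 0")
    case True thus ?thesis unfolding e by (simp add: minus_one_power_iff)
  next
    case False
    then obtain r where r: "W + h = Suc r" by (cases "W + h") auto
    have rp: "even r \<longleftrightarrow> odd (W + h)" using r by (metis even_Suc)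
    show ?thesis unfolding e r diff_Suc_1 using rp
      by (cases "even k"; cases "even W"; cases "even h")
         (simp_all add: n minus_one_power_iff algebra_simps)
  qed
qed

lemma exp_part:
  fixes A B C W H t1 t2 n :: nat and \<alpha> \<beta> \<gamma> :: real
  assumes n: "n > 0" and d1: "2 * A + C = 2 * n * W" and d2: "2 * B + C = 2 * n * H"
  shows "(of_real \<alpha> * exp (pi * \<i> * of_nat t1 / of_nat n)) ^ A *
         (of_real \<beta> * exp (pi * \<i> * of_nat t2 / of_nat n)) ^ B *
         (of_real \<gamma> * exp (pi * \<i> * of_nat (t1 + t2) / (2 * of_nat n))) ^ C
       = of_real (\<alpha> ^ A * \<beta> ^ B * \<gamma> ^ C) * (-1) ^ (t1 * W + t2 * H)"
proof -
  define z1 where "z1 = pi * \<i> * of_nat t1 / (of_nat n :: complex)"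
  define z2 where "z2 = pi * \<i> * of_nat t2 / (of_nat n :: complex)"
  define z3 where "z3 = pi * \<i> * of_nat (t1 + t2) / (2 * of_nat n :: complex)"
  have "exp z1 ^ A * exp z2 ^ B * exp z3 ^ C = exp (of_nat A * z1 + of_nat B * z2 + of_nat C * z3)"
    by (simp add: exp_add exp_of_nat_mult)
  also have "of_nat A * z1 + of_nat B * z2 + of_nat C * z3 = of_nat (t1 * W + t2 * H) * (of_real pi * \<i>)"
  proof -
    have d1': "2 * of_nat A + of_nat C = 2 * (of_nat n :: complex) * of_nat W"
      using arg_cong[OF d1, of "of_nat :: nat \<Rightarrow> complex"] by simp
    have d2': "2 * of_nat B + of_nat C = 2 * (of_nat n :: complex) * of_nat H"
      using arg_cong[OF d2, of "of_nat :: nat \<Rightarrow> complex"] by simp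
    have nz: "(of_nat n :: complex) \<noteq> 0" using n by simp
    have "of_nat A * z1 + of_nat B * z2 + of_nat C * z3 =
          pi * \<i> * (of_nat t1 * (2 * of_nat A + of_nat C) + of_nat t2 * (2 * of_nat B + of_nat C)) / (2 * of_nat n)"
      unfolding z1_def z2_def z3_def using nz by (simp add: field_simps)
    also have "\<dots> = pi * \<i> * (of_nat t1 * of_nat W + of_nat t2 * of_nat H)"
      unfolding d1' d2' using nz by (simp add: field_simps)
    finally show ?thesis by (simp add: algebra_simps)
  qed
  also have "exp (of_nat (t1 * W + t2 * H) * (of_real pi * \<i>)) = (-1) ^ (t1 * W + t2 * H)"
    by (simp only: exp_of_nat_mult exp_pi_i)
  finally have E: "exp z1 ^ A * exp z2 ^ B * exp z3 ^ C = (-1) ^ (t1 * W + t2 * H)" .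
  show ?thesis
    using E unfolding z1_def z2_def z3_def by (simp add: power_mult_distrib algebra_simps)
qed

lemma prod_three:
  assumes fin: "finite M" and r: "\<And>x. x \<in> M \<Longrightarrow> d x = 0 \<or> d x = 1 \<or> d x = (2::int)"
  shows "(\<Prod>x\<in>M. if d x = 2 then a else if d x = 0 then b else c) =
         (a::complex) ^ card {x \<in> M. d x = 2} * b ^ card {x \<in> M. d x = 0} * c ^ card {x \<in> M. d x = 1}"
proof -
  have "(\<Prod>x\<in>M. if d x = 2 then a else if d x = 0 then b else c) =
        prod (\<lambda>_. a) (M \<inter> {x. d x = 2}) * prod (\<lambda>x. if d x = 0 then b else c) (M \<inter> - {x. d x = 2})"
    by (rule prod.If_cases[OF fin])
  also have "prod (\<lambda>x. if d x = 0 then b else c) (M \<inter> - {x. d x = 2}) =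
     prod (\<lambda>_. b) ((M \<inter> - {x. d x = 2}) \<inter> {x. d x = 0}) * prod (\<lambda>_. c) ((M \<inter> - {x. d x = 2}) \<inter> - {x. d x = 0})"
    by (rule prod.If_cases) (use fin in auto)
  also have "(M \<inter> - {x. d x = 2}) \<inter> {x. d x = 0} = {x \<in> M. d x = 0}" by auto
  also have "(M \<inter> - {x. d x = 2}) \<inter> - {x. d x = 0} = {x \<in> M. d x = 1}" using r by force
  also have "M \<inter> {x. d x = 2} = {x \<in> M. d x = 2}" by auto
  finally show ?thesis by (simp add: mult.assoc)
qed

context snake begin

lemma WW_le: "WW \<le> mm"
proof -
  have "0 \<le> NN * (int mm - int WW)" using D2[symmetric] by simp
  hence "0 \<le> int mm - int WW" using NN4 by (simp add: zero_le_mult_iff)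
  thus ?thesis by simp
qed

lemma prod_K:
  "(\<Prod>x\<in>mids n. Kop n \<alpha> \<beta> \<gamma> t1 t2 x (\<rho> x)) =
     of_real (\<alpha> ^ cntA n \<rho> * \<beta> ^ cntB n \<rho> * \<gamma> ^ cntC n \<rho>) * (-1) ^ (t1 * WW + t2 * (mm - WW))"
proof -
  define a where "a = of_real \<alpha> * exp (pi * \<i> * of_nat t1 / of_nat n)"
  define b where "b = of_real \<beta> * exp (pi * \<i> * of_nat t2 / of_nat n)"
  define c where "c = of_real \<gamma> * exp (pi * \<i> * of_nat (t1 + t2) / (2 * of_nat n))"
  define g where "g = (\<lambda>x. if dl x = 2 then a else if dl x = 0 then b else c)"
  have K: "Kop n \<alpha> \<beta> \<gamma> t1 t2 x (\<rho> x) = (if x \<in> Mv then g x else 1)" if x: "x \<in> mids n" for x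
  proof (cases "x \<in> Mv")
    case False
    hence "\<rho> x = x" using x unfolding Mv_def by auto
    thus ?thesis using False by (simp add: Kop_def)
  next
    case True
    note pd = padd_distinct[OF x]
    from dl_cases[OF True] consider
        "dl x = 2" "black x" "\<rho> x = padd n x e1" | "dl x = 1" "\<rho> x = padd n x e3"
      | "dl x = 0" "\<not> black x" "\<rho> x = padd n x e2" by blast
    thus ?thesis
    proof cases
      case 1 thus ?thesis using True pd by (simp add: Kop_def g_def a_def)
    next
      case 2 thus ?thesis using True pd by (simp add: Kop_def g_def c_def)
    next
      case 3 thus ?thesis using True pd by (simp add: Kop_def g_def b_def)
    qed
  qed
  have "(\<Prod>x\<in>mids n. Kop n \<alpha> \<beta> \<gamma> t1 t2 x (\<rho> x)) = (\<Prod>x\<in>mids n. if x \<in> Mv then g x else 1)"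
    by (rule prod.cong) (simp_all add: K)
  also have "\<dots> = prod g (mids n \<inter> {x. x \<in> Mv}) * prod (\<lambda>_. 1) (mids n \<inter> - {x. x \<in> Mv})"
    by (rule prod.If_cases[OF finite_mids])
  also have "mids n \<inter> {x. x \<in> Mv} = Mv" unfolding Mv_def by auto
  also have "prod g Mv = a ^ cntA n \<rho> * b ^ cntB n \<rho> * c ^ cntC n \<rho>"
    unfolding g_def cntA_eq cntB_eq cntC_eq
    by (rule prod_three[OF finO]) (use dl_range in force)
  also have "a ^ cntA n \<rho> * b ^ cntB n \<rho> * c ^ cntC n \<rho> =
      of_real (\<alpha> ^ cntA n \<rho> * \<beta> ^ cntB n \<rho> * \<gamma> ^ cntC n \<rho>) * (-1) ^ (t1 * WW + t2 * (mm - WW))"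
    unfolding a_def b_def c_def
  proof (rule exp_part)
    show "n > 0" using n2 by simp
    have "int (2 * cntA n \<rho> + cntC n \<rho>) = int (2 * n * WW)" using D1 by simp
    thus "2 * cntA n \<rho> + cntC n \<rho> = 2 * n * WW" by (simp only: of_nat_eq_iff)
    have "int (2 * cntB n \<rho> + cntC n \<rho>) = int (2 * n * (mm - WW))" using D2 WW_le by (simp add: of_nat_diff)
    thus "2 * cntB n \<rho> + cntC n \<rho> = 2 * n * (mm - WW)" by (simp only: of_nat_eq_iff)
  qed
  finally show ?thesis by simp
qed

end


context snake begin

lemma per_rho:
  "(\<Sum>t1 \<in> {0, 1::nat}. \<Sum>t2 \<in> {0, 1::nat}.
       (1 / 2 * (-1) ^ ((t1 + n + 1) * (t2 + n + 1))) *
       (of_int (sign \<rho>) * (\<Prod>x\<in>mids n. Kop n \<alpha> \<beta> \<gamma> t1 t2 x (\<rho> x))))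
   = of_real (\<alpha> ^ cntA n \<rho> * \<beta> ^ cntB n \<rho> * \<gamma> ^ cntC n \<rho>) * (-1) ^ crossings n \<rho>"
proof -
  define h where "h = mm - WW"
  have mmh: "mm = WW + h" using WW_le unfolding h_def by simp
  define T where "T = (of_real (\<alpha> ^ cntA n \<rho> * \<beta> ^ cntB n \<rho> * \<gamma> ^ cntC n \<rho>) :: complex)"
  have "(\<Sum>t1 \<in> {0, 1::nat}. \<Sum>t2 \<in> {0, 1::nat}.
       (1 / 2 * (-1) ^ ((t1 + n + 1) * (t2 + n + 1))) *
       (of_int (sign \<rho>) * (\<Prod>x\<in>mids n. Kop n \<alpha> \<beta> \<gamma> t1 t2 x (\<rho> x))))
     = (\<Sum>t1 \<in> {0, 1::nat}. \<Sum>t2 \<in> {0, 1::nat}.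
       T * ((1 / 2 * (-1) ^ ((t1 + n + 1) * (t2 + n + 1))) *
       (of_int ((-1) ^ ((n * (WW + h) - (WW + h)) * (WW + h) + WW * (WW + h - 1) + crossings n \<rho>)) * (-1) ^ (t1 * WW + t2 * h))))"
    unfolding prod_K sign_formula T_def h_def[symmetric] mmh by (simp add: algebra_simps)
  also have "\<dots> = T * (\<Sum>t1 \<in> {0, 1::nat}. \<Sum>t2 \<in> {0, 1::nat}.
       (1 / 2 * (-1) ^ ((t1 + n + 1) * (t2 + n + 1))) *
       (of_int ((-1) ^ ((n * (WW + h) - (WW + h)) * (WW + h) + WW * (WW + h - 1) + crossings n \<rho>)) * (-1) ^ (t1 * WW + t2 * h)))"
    by (simp only: sum_distrib_left)
  also have "\<dots> = T * (-1) ^ crossings n \<rho>"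
    using final_parity[of n WW h "crossings n \<rho>"] n2 by simp
  finally show ?thesis unfolding T_def .
qed

end

lemma Kop_zero:
  assumes "x \<in> mids n" "\<not> ((black x \<longrightarrow> y \<in> {x, padd n x e3, padd n x e1}) \<and>
                    (\<not> black x \<longrightarrow> y \<in> {x, padd n x e3, padd n x e2}))"
  shows "Kop n \<alpha> \<beta> \<gamma> t1 t2 x y = 0"
  using assms by (auto simp: Kop_def)

lemma det_GS:
  "det_on (mids n) (Kop n \<alpha> \<beta> \<gamma> t1 t2) =
     (\<Sum>\<rho>\<in>GS n. of_int (sign \<rho>) * (\<Prod>x\<in>mids n. Kop n \<alpha> \<beta> \<gamma> t1 t2 x (\<rho> x)))"
proof -
  have fm: "finite (mids n)"
  proof -
    have "mids n \<subseteq> {0..<2 * int n} \<times> {0..<2 * int n}" by (auto simp: mids_iff)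
    thus ?thesis by (rule finite_subset) auto
  qed
  have sub: "GS n \<subseteq> {p. p permutes mids n}" unfolding GS_def by auto
  show ?thesis unfolding det_on_def
  proof (rule sum.mono_neutral_right)
    show "finite {p. p permutes mids n}" by (rule finite_permutations[OF fm])
    show "GS n \<subseteq> {p. p permutes mids n}" by (rule sub)
    show "\<forall>p\<in>{p. p permutes mids n} - GS n. of_int (sign p) * (\<Prod>x\<in>mids n. Kop n \<alpha> \<beta> \<gamma> t1 t2 x (p x)) = 0"
    proof
      fix p assume p: "p \<in> {p. p permutes mids n} - GS n"
      then obtain x where x: "x \<in> mids n" "\<not> ((black x \<longrightarrow> p x \<in> {x, padd n x e3, padd n x e1}) \<and>
                    (\<not> black x \<longrightarrow> p x \<in> {x, padd n x e3, padd n x e2}))"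
        unfolding GS_def by blast
      have "Kop n \<alpha> \<beta> \<gamma> t1 t2 x (p x) = 0" by (rule Kop_zero[OF x])
      hence "(\<Prod>x\<in>mids n. Kop n \<alpha> \<beta> \<gamma> t1 t2 x (p x)) = 0" using x(1) fm by (metis prod_zero_iff)
      thus "of_int (sign p) * (\<Prod>x\<in>mids n. Kop n \<alpha> \<beta> \<gamma> t1 t2 x (p x)) = 0" by simp
    qed
  qed
qed

theorem theorem3p1:
  fixes n :: nat and \<alpha> \<beta> \<gamma> :: real
  assumes "\<alpha> > 0" "\<beta> > 0" "\<gamma> > 0" "n \<ge> 2"
  shows "Z_GS n \<alpha> \<beta> \<gamma> =
    (\<Sum>t1 \<in> {0, 1::nat}. \<Sum>t2 \<in> {0, 1::nat}.
       (1 / 2 * (-1) ^ ((t1 + n + 1) * (t2 + n + 1))) * det_on (mids n) (Kop n \<alpha> \<beta> \<gamma> t1 t2))"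
proof -
  have "(\<Sum>t1 \<in> {0, 1::nat}. \<Sum>t2 \<in> {0, 1::nat}.
       (1 / 2 * (-1) ^ ((t1 + n + 1) * (t2 + n + 1))) * det_on (mids n) (Kop n \<alpha> \<beta> \<gamma> t1 t2))
    = (\<Sum>t1 \<in> {0, 1::nat}. \<Sum>t2 \<in> {0, 1::nat}. \<Sum>\<rho>\<in>GS n.
       (1 / 2 * (-1) ^ ((t1 + n + 1) * (t2 + n + 1))) *
       (of_int (sign \<rho>) * (\<Prod>x\<in>mids n. Kop n \<alpha> \<beta> \<gamma> t1 t2 x (\<rho> x))))"
    unfolding det_GS by (simp add: sum_distrib_left)
  also have "\<dots> = (\<Sum>\<rho>\<in>GS n. \<Sum>t1 \<in> {0, 1::nat}. \<Sum>t2 \<in> {0, 1::nat}.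
       (1 / 2 * (-1) ^ ((t1 + n + 1) * (t2 + n + 1))) *
       (of_int (sign \<rho>) * (\<Prod>x\<in>mids n. Kop n \<alpha> \<beta> \<gamma> t1 t2 x (\<rho> x))))"
    by (simp add: sum.swap[of _ "GS n"])
  also have "\<dots> = (\<Sum>\<rho>\<in>GS n. of_real (\<alpha> ^ cntA n \<rho> * \<beta> ^ cntB n \<rho> * \<gamma> ^ cntC n \<rho>) * (-1) ^ crossings n \<rho>)"
  proof (rule sum.cong[OF refl])
    fix \<rho> assume "\<rho> \<in> GS n"
    then interpret snake n \<rho> using assms(4) by unfold_locales auto
    show "(\<Sum>t1 \<in> {0, 1::nat}. \<Sum>t2 \<in> {0, 1::nat}.
       (1 / 2 * (-1) ^ ((t1 + n + 1) * (t2 + n + 1))) *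
       (of_int (sign \<rho>) * (\<Prod>x\<in>mids n. Kop n \<alpha> \<beta> \<gamma> t1 t2 x (\<rho> x))))
      = of_real (\<alpha> ^ cntA n \<rho> * \<beta> ^ cntB n \<rho> * \<gamma> ^ cntC n \<rho>) * (-1) ^ crossings n \<rho>"
      by (rule per_rho)
  qed
  also have "\<dots> = Z_GS n \<alpha> \<beta> \<gamma>" unfolding Z_GS_def by (simp add: mult.commute)
  finally show ?thesis by simp
qed

end
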